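(* The map $(\mathfrak F,\mathfrak G)\mapsto\mathrm{St}_{\mathfrak F}\cap\mathrm{St}_{\mathfrak G}$ from the set of taut couples of generalized flags in $V$ and $V_*$ to the set of subalgebras of $\mathfrak{gl}(V,V_* )$ is injective.
   Context: $V,V_*$: countable-dimensional complex spaces with nondegenerate pairing; $\mathfrak{gl}(V,V_* )=V\otimes V_*$ acting on $V$ by $(v\otimes w)u=\langle u,w\rangle v$ and on $V_*$ by $(v\otimes w)y=-\langle v,y\rangle w$. Orthogonal complement $F^\perp$; closed: $F=F^{\perp\perp}$; $\overline F=F^{\perp\perp}$. Generalized flag: chain of subspaces, every member in an immediate predecessor–successor pair $F'\subsetneq F''$ (no member strictly between), every nonzero vector in $F''\setminus F'$ for some pair. Semiclosed: $\overline{F'}\in\{F',F''\}$ for every pair. $\mathrm{St}$ = stabilizer in $\mathfrak{gl}(V,V_* )$. Taut couple: semiclosed generalized flags $\mathfrak F$ in $V$, $\mathfrak G$ in $V_*$ with $\mathfrak F^\perp=\{F^\perp\}$ stable under $\mathrm{St}_{\mathfrak G}$ and $\mathfrak G^\perp$ stable under $\mathrm{St}_{\mathfrak F}$. *)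

theory Defs
  imports Complex_Main "HOL-Library.Countable_Set"
begin

text \<open>V is modelled as the whole type 'v with a complex scalar multiplication scV,
  V_* as the whole type 'w with scalar multiplication scW, and the pairing as pr.\<close>

definition countable_dim :: "(complex \<Rightarrow> 'v::ab_group_add \<Rightarrow> 'v) \<Rightarrow> bool" where
  "countable_dim sc \<longleftrightarrow> (\<exists>B. countable B \<and> infinite B \<and> \<not> module.dependent sc B
       \<and> module.span sc B = UNIV)"

definition nondeg_pairing ::
  "(complex \<Rightarrow> 'v::ab_group_add \<Rightarrow> 'v) \<Rightarrow> (complex \<Rightarrow> 'w::ab_group_add \<Rightarrow> 'w)
   \<Rightarrow> ('v \<Rightarrow> 'w \<Rightarrow> complex) \<Rightarrow> bool" where
  "nondeg_pairing scV scW pr \<longleftrightarrow>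
     (\<forall>y. Vector_Spaces.linear scV (*) (\<lambda>u. pr u y)) \<and>
     (\<forall>u. Vector_Spaces.linear scW (*) (pr u)) \<and>
     (\<forall>u. (\<forall>y. pr u y = 0) \<longrightarrow> u = 0) \<and>
     (\<forall>y. (\<forall>u. pr u y = 0) \<longrightarrow> y = 0)"

definition perpV :: "('v \<Rightarrow> 'w \<Rightarrow> complex) \<Rightarrow> 'v set \<Rightarrow> 'w set" where
  "perpV pr F = {y. \<forall>u\<in>F. pr u y = 0}"

definition perpW :: "('v \<Rightarrow> 'w \<Rightarrow> complex) \<Rightarrow> 'w set \<Rightarrow> 'v set" where
  "perpW pr G = {u. \<forall>y\<in>G. pr u y = 0}"

definition imm_pair :: "'a set set \<Rightarrow> 'a set \<Rightarrow> 'a set \<Rightarrow> bool" where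
  "imm_pair \<FF> F' F'' \<longleftrightarrow> F' \<in> \<FF> \<and> F'' \<in> \<FF> \<and> F' \<subset> F'' \<and>
     \<not> (\<exists>H\<in>\<FF>. F' \<subset> H \<and> H \<subset> F'')"

definition gen_flag :: "(complex \<Rightarrow> 'a::ab_group_add \<Rightarrow> 'a) \<Rightarrow> 'a set set \<Rightarrow> bool" where
  "gen_flag sc \<FF> \<longleftrightarrow>
     (\<forall>F\<in>\<FF>. module.subspace sc F) \<and>
     (\<forall>F\<in>\<FF>. \<forall>G\<in>\<FF>. F \<subseteq> G \<or> G \<subseteq> F) \<and>
     (\<forall>F\<in>\<FF>. \<exists>G. imm_pair \<FF> F G \<or> imm_pair \<FF> G F) \<and>
     (\<forall>v. v \<noteq> 0 \<longrightarrow> (\<exists>F' F''. imm_pair \<FF> F' F'' \<and> v \<in> F'' \<and> v \<notin> F'))"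

text \<open>Semiclosed generalized flags in V and in V_* (closure = double orthogonal).\<close>
definition semiclosed_V ::
  "(complex \<Rightarrow> 'v::ab_group_add \<Rightarrow> 'v) \<Rightarrow> ('v \<Rightarrow> 'w \<Rightarrow> complex) \<Rightarrow> 'v set set \<Rightarrow> bool" where
  "semiclosed_V scV pr \<FF> \<longleftrightarrow> gen_flag scV \<FF> \<and>
     (\<forall>F' F''. imm_pair \<FF> F' F'' \<longrightarrow> perpW pr (perpV pr F') \<in> {F', F''})"

definition semiclosed_W ::
  "(complex \<Rightarrow> 'w::ab_group_add \<Rightarrow> 'w) \<Rightarrow> ('v \<Rightarrow> 'w \<Rightarrow> complex) \<Rightarrow> 'w set set \<Rightarrow> bool" where
  "semiclosed_W scW pr \<GG> \<longleftrightarrow> gen_flag scW \<GG> \<and>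
     (\<forall>G' G''. imm_pair \<GG> G' G'' \<longrightarrow> perpV pr (perpW pr G') \<in> {G', G''})"

text \<open>gl(V,V_*) = V \<otimes> V_*: an element \<Sum> v_i \<otimes> w_i is represented by the pair of
  its actions on V and on V_* (this pair determines the element, by nondegeneracy).\<close>
definition glVV ::
  "(complex \<Rightarrow> 'v::ab_group_add \<Rightarrow> 'v) \<Rightarrow> (complex \<Rightarrow> 'w::ab_group_add \<Rightarrow> 'w)
   \<Rightarrow> ('v \<Rightarrow> 'w \<Rightarrow> complex) \<Rightarrow> (('v \<Rightarrow> 'v) \<times> ('w \<Rightarrow> 'w)) set" where
  "glVV scV scW pr =
     {((\<lambda>u. \<Sum>(v,w)\<leftarrow>ps. scV (pr u w) v), (\<lambda>y. - (\<Sum>(v,w)\<leftarrow>ps. scW (pr v y) w))) | ps. True}"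

definition St_V ::
  "(complex \<Rightarrow> 'v::ab_group_add \<Rightarrow> 'v) \<Rightarrow> (complex \<Rightarrow> 'w::ab_group_add \<Rightarrow> 'w)
   \<Rightarrow> ('v \<Rightarrow> 'w \<Rightarrow> complex) \<Rightarrow> 'v set set \<Rightarrow> (('v \<Rightarrow> 'v) \<times> ('w \<Rightarrow> 'w)) set" where
  "St_V scV scW pr \<FF> = {x \<in> glVV scV scW pr. \<forall>F\<in>\<FF>. fst x ` F \<subseteq> F}"

definition St_W ::
  "(complex \<Rightarrow> 'v::ab_group_add \<Rightarrow> 'v) \<Rightarrow> (complex \<Rightarrow> 'w::ab_group_add \<Rightarrow> 'w)
   \<Rightarrow> ('v \<Rightarrow> 'w \<Rightarrow> complex) \<Rightarrow> 'w set set \<Rightarrow> (('v \<Rightarrow> 'v) \<times> ('w \<Rightarrow> 'w)) set" where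
  "St_W scV scW pr \<GG> = {x \<in> glVV scV scW pr. \<forall>G\<in>\<GG>. snd x ` G \<subseteq> G}"

definition taut_couple ::
  "(complex \<Rightarrow> 'v::ab_group_add \<Rightarrow> 'v) \<Rightarrow> (complex \<Rightarrow> 'w::ab_group_add \<Rightarrow> 'w)
   \<Rightarrow> ('v \<Rightarrow> 'w \<Rightarrow> complex) \<Rightarrow> 'v set set \<Rightarrow> 'w set set \<Rightarrow> bool" where
  "taut_couple scV scW pr \<FF> \<GG> \<longleftrightarrow>
     semiclosed_V scV pr \<FF> \<and> semiclosed_W scW pr \<GG> \<and>
     (\<forall>x\<in>St_W scV scW pr \<GG>. \<forall>F\<in>\<FF>. snd x ` perpV pr F \<subseteq> perpV pr F) \<and>
     (\<forall>x\<in>St_V scV scW pr \<FF>. \<forall>G\<in>\<GG>. fst x ` perpW pr G \<subseteq> perpW pr G)"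

end

theory Submission
  imports Defs
begin


definition flagish :: "'a::zero set set \<Rightarrow> bool" where
  "flagish FF \<longleftrightarrow> (\<forall>F\<in>FF. 0 \<in> F) \<and> (\<forall>F\<in>FF. \<forall>G\<in>FF. F \<subseteq> G \<or> G \<subseteq> F) \<and>
     (\<forall>F\<in>FF. \<exists>G. imm_pair FF F G \<or> imm_pair FF G F) \<and>
     (\<forall>v. v \<noteq> 0 \<longrightarrow> (\<exists>F' F''. imm_pair FF F' F'' \<and> v \<in> F'' \<and> v \<notin> F'))"

definition prpair :: "'a set set \<Rightarrow> 'a \<Rightarrow> 'a set \<times> 'a set" where
  "prpair FF v = (SOME (A,B). imm_pair FF A B \<and> v \<in> B \<and> v \<notin> A)"

definition low :: "'a set set \<Rightarrow> 'a \<Rightarrow> 'a set" where "low FF v = fst (prpair FF v)"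
definition high :: "'a set set \<Rightarrow> 'a \<Rightarrow> 'a set" where "high FF v = snd (prpair FF v)"

lemma flag_chain: "flagish FF \<Longrightarrow> F \<in> FF \<Longrightarrow> G \<in> FF \<Longrightarrow> F \<subseteq> G \<or> G \<subseteq> F"
proof -
  assume "flagish FF" "F \<in> FF" "G \<in> FF"
  moreover have "\<forall>F\<in>FF. \<forall>G\<in>FF. F \<subseteq> G \<or> G \<subseteq> F" using \<open>flagish FF\<close> unfolding flagish_def by (elim conjE)
  ultimately show ?thesis by simp
qed

lemma flag_zero: "flagish FF \<Longrightarrow> F \<in> FF \<Longrightarrow> 0 \<in> F"
proof -
  assume "flagish FF" "F \<in> FF"
  moreover have "\<forall>F\<in>FF. 0 \<in> F" using \<open>flagish FF\<close> unfolding flagish_def by (elim conjE)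
  ultimately show ?thesis by simp
qed

lemma L1:
  assumes "flagish FF" "v \<noteq> 0"
  shows "imm_pair FF (low FF v) (high FF v) \<and> v \<in> high FF v \<and> v \<notin> low FF v"
proof -
  have "\<forall>v. v \<noteq> 0 \<longrightarrow> (\<exists>F' F''. imm_pair FF F' F'' \<and> v \<in> F'' \<and> v \<notin> F')"
    using assms(1) unfolding flagish_def by (elim conjE)
  then obtain A B where "imm_pair FF A B \<and> v \<in> B \<and> v \<notin> A"
    using assms(2) by blast
  hence "\<exists>p. (case p of (A,B) \<Rightarrow> imm_pair FF A B \<and> v \<in> B \<and> v \<notin> A)" by auto
  hence "case prpair FF v of (A,B) \<Rightarrow> imm_pair FF A B \<and> v \<in> B \<and> v \<notin> A"
    unfolding prpair_def by (rule someI_ex)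
  thus ?thesis unfolding low_def high_def by (cases "prpair FF v") simp
qed

lemma G3:
  assumes fl: "flagish FF" and F: "F \<in> FF" and p: "imm_pair FF A B" "v \<in> B" "v \<notin> F"
  shows "F \<subseteq> A"
proof -
  have inl: "A \<in> FF" and inh: "B \<in> FF" and nb: "\<not> (\<exists>H\<in>FF. A \<subset> H \<and> H \<subset> B)"
    using p(1) unfolding imm_pair_def by auto
  have "F \<subseteq> B" using flag_chain[OF fl F inh] p(2,3) by blast
  hence "F \<subset> B" using p(2,3) by blast
  show ?thesis
  proof (rule ccontr)
    assume "\<not> F \<subseteq> A"
    hence "A \<subset> F" using flag_chain[OF fl F inl] by blast
    thus False using nb F \<open>F \<subset> B\<close> by blast
  qed
qed

lemma G4:
  assumes fl: "flagish FF" and F: "F \<in> FF" and p: "imm_pair FF A B" "v \<notin> A" "v \<in> F"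
  shows "B \<subseteq> F"
proof -
  have inl: "A \<in> FF" and inh: "B \<in> FF" and nb: "\<not> (\<exists>H\<in>FF. A \<subset> H \<and> H \<subset> B)"
    using p(1) unfolding imm_pair_def by auto
  show ?thesis
  proof (rule ccontr)
    assume a: "\<not> B \<subseteq> F"
    hence "F \<subset> B" using flag_chain[OF fl F inh] by blast
    moreover have "A \<subset> F" using flag_chain[OF fl F inl] p(2,3) by blast
    ultimately show False using nb F by blast
  qed
qed

lemma L3:
  assumes fl: "flagish FF" and F: "F \<in> FF" and v: "v \<noteq> 0" "v \<notin> F"
  shows "F \<subseteq> low FF v"
  using L1[OF fl v(1)] G3[OF fl F _ _ v(2)] by blast

lemma L4:
  assumes fl: "flagish FF" and F: "F \<in> FF" and v: "v \<noteq> 0" "v \<in> F"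
  shows "high FF v \<subseteq> F"
  using L1[OF fl v(1)] G4[OF fl F _ _ v(2)] by blast

lemma L2:
  assumes fl: "flagish FF" and ab: "imm_pair FF A B" "v \<in> B" "v \<notin> A"
  shows "low FF v = A \<and> high FF v = B"
proof -
  have A: "A \<in> FF" and B: "B \<in> FF"
    using ab(1) unfolding imm_pair_def by auto
  have v0: "v \<noteq> 0" using flag_zero[OF fl A] ab(3) by blast
  have p: "imm_pair FF (low FF v) (high FF v)" "v \<in> high FF v" "v \<notin> low FF v"
    using L1[OF fl v0] by auto
  have inl: "low FF v \<in> FF" and inh: "high FF v \<in> FF"
    using p(1) unfolding imm_pair_def by auto
  have 1: "A \<subseteq> low FF v" using L3[OF fl A v0 ab(3)] .
  have 2: "high FF v \<subseteq> B" using L4[OF fl B v0 ab(2)] .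
  have 3: "low FF v \<subseteq> A" using G3[OF fl inl ab(1) ab(2) p(3)] .
  have 4: "B \<subseteq> high FF v" using G4[OF fl inh ab(1) ab(3) p(2)] .
  show ?thesis using 1 2 3 4 by blast
qed

lemma L5:
  assumes fl: "flagish FF" and c: "c \<in> FF" and z: "z \<in> c" "z \<noteq> 0"
  shows "low FF z \<subset> c"
proof -
  have "high FF z \<subseteq> c" using L4[OF fl c z(2) z(1)] .
  moreover have "low FF z \<subset> high FF z" using L1[OF fl z(2)] unfolding imm_pair_def by blast
  ultimately show ?thesis by blast
qed

lemma perpWV_sup: "X \<subseteq> perpW p (perpV p X)"
  unfolding perpV_def perpW_def by blast
lemma perpVW_sup: "Y \<subseteq> perpV p (perpW p Y)"
  unfolding perpV_def perpW_def by blast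
lemma perpV_anti: "X \<subseteq> Y \<Longrightarrow> perpV p Y \<subseteq> perpV p X"
  unfolding perpV_def by blast
lemma perpW_anti: "X \<subseteq> Y \<Longrightarrow> perpW p Y \<subseteq> perpW p X"
  unfolding perpW_def by blast
lemma perpV_triple: "perpV p (perpW p (perpV p X)) = perpV p X"
  by (meson perpV_anti perpVW_sup perpWV_sup subset_antisym)
lemma perpW_triple: "perpW p (perpV p (perpW p X)) = perpW p X"
  by (meson perpW_anti perpVW_sup perpWV_sup subset_antisym)
definition swp :: "('a \<Rightarrow> 'b \<Rightarrow> complex) \<Rightarrow> 'b \<Rightarrow> 'a \<Rightarrow> complex" where
  "swp p = (\<lambda>w v. p v w)"

lemma perp_swap: "perpV (swp p) = perpW p" "perpW (swp p) = perpV p"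
  unfolding perpV_def perpW_def swp_def by simp_all

definition Rel where
  "Rel p FF GG v w \<longleftrightarrow> (\<forall>F\<in>FF. v \<in> F \<or> w \<in> perpV p F) \<and> (\<forall>G\<in>GG. w \<in> G \<or> v \<in> perpW p G)"

lemma Rel_swap: "Rel (swp p) GG FF w v = Rel p FF GG v w"
  unfolding Rel_def perp_swap by (rule conj_commute)



lemma core:
  fixes p :: "'a::ab_group_add \<Rightarrow> 'b::ab_group_add \<Rightarrow> complex"
  assumes flF: "flagish FF" and flG: "flagish GG"
    and scG: "\<forall>G' G''. imm_pair GG G' G'' \<longrightarrow> perpV p (perpW p G') \<in> {G', G''}"
    and p0: "\<forall>x. p x 0 = 0"
    and TA: "\<forall>F\<in>FF. \<forall>w. w \<noteq> 0 \<longrightarrow> (\<forall>v'. v' \<in> perpW p (low GG w) \<longrightarrow> w \<in> perpV p F \<or> v' \<in> perpW p (perpV p F))"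
    and TB: "\<forall>G\<in>GG. \<forall>v. v \<noteq> 0 \<longrightarrow> (\<forall>w. w \<in> perpV p (low FF v) \<longrightarrow> v \<in> perpW p G \<or> w \<in> perpV p (perpW p G))"
    and v0: "v \<noteq> 0"
  shows "perpW p {w. Rel p FF GG v w} = perpW p (perpV p (low FF v))"
proof -
  define a where "a = low FF v"
  define Y where "Y = perpV p a"
  have aF: "a \<in> FF" and va: "v \<notin> a" using L1[OF flF v0] unfolding a_def imm_pair_def by auto
  define S where "S = {G\<in>GG. Y \<subseteq> perpV p (perpW p G)}"
  have K: "Rel p FF GG v z" if z0: "z \<noteq> 0" and zS: "low GG z \<notin> S" for z
  proof -
    define c' where "c' = low GG z"
    have c'G: "c' \<in> GG" using L1[OF flG z0] unfolding c'_def imm_pair_def by auto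
    have zY: "z \<in> Y"
    proof (rule ccontr)
      assume nz: "z \<notin> Y"
      have "\<forall>v'. v' \<in> perpW p c' \<longrightarrow> z \<in> perpV p a \<or> v' \<in> perpW p (perpV p a)"
        using TA aF z0 unfolding c'_def by blast
      hence "perpW p c' \<subseteq> perpW p (perpV p a)" using nz unfolding Y_def by blast
      hence "perpV p (perpW p (perpV p a)) \<subseteq> perpV p (perpW p c')" by (rule perpV_anti)
      hence "Y \<subseteq> perpV p (perpW p c')" unfolding Y_def perpV_triple .
      hence "c' \<in> S" using c'G unfolding S_def by blast
      thus False using zS unfolding c'_def by blast
    qed
    have part1: "\<forall>F\<in>FF. v \<in> F \<or> z \<in> perpV p F"
    proof
      fix F assume F: "F \<in> FF"
      show "v \<in> F \<or> z \<in> perpV p F"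
      proof (cases "v \<in> F")
        case False
        hence "F \<subseteq> a" using L3[OF flF F v0] unfolding a_def by blast
        hence "Y \<subseteq> perpV p F" unfolding Y_def by (rule perpV_anti)
        thus ?thesis using zY by blast
      qed simp
    qed
    have vc': "v \<in> perpW p c'"
    proof -
      have "\<forall>w. w \<in> Y \<longrightarrow> v \<in> perpW p c' \<or> w \<in> perpV p (perpW p c')"
        using TB c'G v0 unfolding Y_def a_def by blast
      moreover have "\<not> Y \<subseteq> perpV p (perpW p c')" using zS c'G unfolding S_def c'_def by blast
      ultimately show ?thesis by blast
    qed
    have part2: "\<forall>G\<in>GG. z \<in> G \<or> v \<in> perpW p G"
    proof
      fix G assume G: "G \<in> GG"
      show "z \<in> G \<or> v \<in> perpW p G"
      proof (cases "z \<in> G")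
        case False
        hence "G \<subseteq> c'" using L3[OF flG G z0] unfolding c'_def by blast
        hence "perpW p c' \<subseteq> perpW p G" by (rule perpW_anti)
        thus ?thesis using vc' by blast
      qed simp
    qed
    show ?thesis unfolding Rel_def using part1 part2 by blast
  qed
  show ?thesis
  proof (rule subset_antisym)
    show "perpW p (perpV p (low FF v)) \<subseteq> perpW p {w. Rel p FF GG v w}"
    proof (rule perpW_anti, rule subsetI)
      fix w assume "w \<in> {w. Rel p FF GG v w}"
      hence "\<forall>F\<in>FF. v \<in> F \<or> w \<in> perpV p F" unfolding Rel_def by blast
      thus "w \<in> perpV p (low FF v)" using aF va unfolding a_def by blast
    qed
  next
    show "perpW p {w. Rel p FF GG v w} \<subseteq> perpW p (perpV p (low FF v))"
    proof (rule subsetI)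
      fix x assume hx: "x \<in> perpW p {w. Rel p FF GG v w}"
      have hx': "p x w = 0" if "Rel p FF GG v w" for w using hx that unfolding perpW_def by blast
      have "p x y = 0" if yY: "y \<in> Y" for y
      proof (cases "y = 0")
        case True thus ?thesis using p0 by simp
      next
        case y0: False
        define c where "c = low GG y"
        have cG: "c \<in> GG" and yc: "y \<notin> c" using L1[OF flG y0] unfolding c_def imm_pair_def by auto
        show ?thesis
        proof (cases "c \<in> S")
          case False
          thus ?thesis using K[OF y0] hx' unfolding c_def by blast
        next
          case True
          hence Yc: "Y \<subseteq> perpV p (perpW p c)" unfolding S_def by blast
          have min: "\<not> G \<subset> c" if GS: "G \<in> S" for G
          proof
            assume Gc: "G \<subset> c"
            then obtain y' where y': "y' \<in> c" "y' \<notin> G" by blast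
            have GG': "G \<in> GG" and YG: "Y \<subseteq> perpV p (perpW p G)" using GS unfolding S_def by auto
            have y'0: "y' \<noteq> 0" using y' flag_zero[OF flG GG'] by blast
            have pr: "imm_pair GG (low GG y') (high GG y')" using L1[OF flG y'0] by blast
            have "G \<subseteq> low GG y'" using L3[OF flG GG' y'0 y'(2)] .
            moreover have "high GG y' \<subseteq> c" using L4[OF flG cG y'0 y'(1)] .
            moreover have "perpV p (perpW p (low GG y')) \<in> {low GG y', high GG y'}" using scG pr by blast
            moreover have "low GG y' \<subseteq> high GG y'" using pr unfolding imm_pair_def by blast
            ultimately have cl: "perpV p (perpW p (low GG y')) \<subseteq> c" by blast
            have "perpV p (perpW p G) \<subseteq> perpV p (perpW p (low GG y'))"
              by (rule perpV_anti, rule perpW_anti, fact)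
            hence "Y \<subseteq> c" using YG cl by blast
            thus False using yY yc by blast
          qed
          have xc: "p x z = 0" if zc: "z \<in> c" for z
          proof (cases "z = 0")
            case True thus ?thesis using p0 by simp
          next
            case z0: False
            have "low GG z \<subset> c" using L5[OF flG cG zc z0] .
            hence "low GG z \<notin> S" using min by blast
            thus ?thesis using K[OF z0] hx' by blast
          qed
          hence "x \<in> perpW p c" unfolding perpW_def by blast
          hence "x \<in> perpW p (perpV p (perpW p c))" unfolding perpW_triple .
          moreover have "y \<in> perpV p (perpW p c)" using Yc yY by blast
          ultimately show ?thesis unfolding perpW_def by blast
        qed
      qed
      thus "x \<in> perpW p (perpV p (low FF v))" unfolding perpW_def Y_def a_def perpV_def by blast
    qed
  qed
qed



definition Phi :: "('a::zero \<Rightarrow> 'a set) \<Rightarrow> 'a \<Rightarrow> 'a set" where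
  "Phi A u = (if u \<in> A u then {u'. u' = 0 \<or> (u' \<noteq> 0 \<and> A u' \<subset> A u)} else A u)"

lemma low_Phi:
  fixes p :: "'a::ab_group_add \<Rightarrow> 'b \<Rightarrow> complex"
  assumes fl: "flagish FF"
    and sc: "\<forall>F' F''. imm_pair FF F' F'' \<longrightarrow> perpW p (perpV p F') \<in> {F', F''}"
    and u0: "u \<noteq> 0"
  shows "low FF u = Phi (\<lambda>u. perpW p (perpV p (low FF u))) u"
proof -
  let ?A = "\<lambda>u. perpW p (perpV p (low FF u))"
  have pr: "imm_pair FF (low FF u) (high FF u)" "u \<in> high FF u" "u \<notin> low FF u"
    using L1[OF fl u0] by auto
  have lF: "low FF u \<in> FF" using pr unfolding imm_pair_def by blast
  have lh: "low FF u \<subset> high FF u" using pr unfolding imm_pair_def by blast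
  have "?A u \<in> {low FF u, high FF u}" using sc pr by blast
  thus ?thesis
  proof
    assume e: "?A u = low FF u"
    thus ?thesis unfolding Phi_def using pr by simp
  next
    assume e: "?A u \<in> {high FF u}"
    hence e: "?A u = high FF u" by simp
    have "low FF u = {u'. u' = 0 \<or> (u' \<noteq> 0 \<and> ?A u' \<subset> ?A u)}"
    proof (rule set_eqI, rule iffI)
      fix u' assume u': "u' \<in> low FF u"
      show "u' \<in> {u'. u' = 0 \<or> (u' \<noteq> 0 \<and> ?A u' \<subset> ?A u)}"
      proof (cases "u' = 0")
        case False
        have pr': "imm_pair FF (low FF u') (high FF u')" using L1[OF fl False] by blast
        have "high FF u' \<subseteq> low FF u" using L4[OF fl lF False u'] .
        moreover have "?A u' \<in> {low FF u', high FF u'}" using sc pr' by blast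
        moreover have "low FF u' \<subseteq> high FF u'" using pr' unfolding imm_pair_def by blast
        ultimately have "?A u' \<subseteq> low FF u" by blast
        thus ?thesis using e lh False by blast
      qed simp
    next
      fix u' assume u': "u' \<in> {u'. u' = 0 \<or> (u' \<noteq> 0 \<and> ?A u' \<subset> ?A u)}"
      show "u' \<in> low FF u"
      proof (cases "u' = 0")
        case True thus ?thesis using flag_zero[OF fl lF] by simp
      next
        case False
        hence lt: "?A u' \<subset> ?A u" using u' by blast
        show ?thesis
        proof (rule ccontr)
          assume "u' \<notin> low FF u"
          hence "low FF u \<subseteq> low FF u'" using L3[OF fl lF False] by blast
          hence "?A u \<subseteq> ?A u'" by (intro perpW_anti perpV_anti)
          thus False using lt by blast
        qed
      qed
    qed
    thus ?thesis unfolding Phi_def using e pr by simp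
  qed
qed

lemma high_low:
  assumes fl: "flagish FF" and u0: "u \<noteq> 0"
  shows "high FF u = {u'. u' = 0 \<or> (u' \<noteq> 0 \<and> low FF u' \<subseteq> low FF u)}"
proof -
  have pr: "imm_pair FF (low FF u) (high FF u)" "u \<in> high FF u" "u \<notin> low FF u"
    using L1[OF fl u0] by auto
  have lF: "low FF u \<in> FF" and hF: "high FF u \<in> FF"
    and nb: "\<not> (\<exists>H\<in>FF. low FF u \<subset> H \<and> H \<subset> high FF u)"
    using pr unfolding imm_pair_def by auto
  have lh: "low FF u \<subset> high FF u" using pr unfolding imm_pair_def by blast
  show ?thesis
  proof (rule set_eqI, rule iffI)
    fix u' assume u': "u' \<in> high FF u"
    show "u' \<in> {u'. u' = 0 \<or> (u' \<noteq> 0 \<and> low FF u' \<subseteq> low FF u)}"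
    proof (cases "u' = 0")
      case False
      have pr': "imm_pair FF (low FF u') (high FF u')" "u' \<notin> low FF u'" using L1[OF fl False] by auto
      have l'F: "low FF u' \<in> FF" using pr' unfolding imm_pair_def by blast
      have "low FF u' \<subseteq> low FF u"
      proof (rule ccontr)
        assume "\<not> low FF u' \<subseteq> low FF u"
        hence "low FF u \<subset> low FF u'" using flag_chain[OF fl lF l'F] by blast
        hence "\<not> low FF u' \<subset> high FF u" using nb l'F by blast
        hence "high FF u \<subseteq> low FF u'" using flag_chain[OF fl hF l'F] by blast
        thus False using u' pr' by blast
      qed
      thus ?thesis using False by blast
    qed simp
  next
    fix u' assume u': "u' \<in> {u'. u' = 0 \<or> (u' \<noteq> 0 \<and> low FF u' \<subseteq> low FF u)}"
    show "u' \<in> high FF u"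
    proof (cases "u' = 0")
      case True thus ?thesis using flag_zero[OF fl hF] by simp
    next
      case False
      hence le: "low FF u' \<subseteq> low FF u" using u' by blast
      show ?thesis
      proof (rule ccontr)
        assume "u' \<notin> high FF u"
        hence "high FF u \<subseteq> low FF u'" using L3[OF fl hF False] by blast
        thus False using le lh by blast
      qed
    qed
  qed
qed

lemma recover_sub:
  fixes p :: "'a::ab_group_add \<Rightarrow> 'b \<Rightarrow> complex"
  assumes fl: "flagish FF" and fl': "flagish FF'"
    and sc: "\<forall>F' F''. imm_pair FF F' F'' \<longrightarrow> perpW p (perpV p F') \<in> {F', F''}"
    and sc': "\<forall>F' F''. imm_pair FF' F' F'' \<longrightarrow> perpW p (perpV p F') \<in> {F', F''}"
    and eq: "\<forall>v. v \<noteq> 0 \<longrightarrow> perpW p (perpV p (low FF v)) = perpW p (perpV p (low FF' v))"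
  shows "FF \<subseteq> FF'"
proof -
  have Pcong: "Phi A u = Phi B u" if "\<forall>v. v \<noteq> 0 \<longrightarrow> A v = B v" "u \<noteq> 0" for A B :: "'a \<Rightarrow> 'a set" and u
  proof -
    have "{u'. u' = 0 \<or> (u' \<noteq> 0 \<and> A u' \<subset> A u)} = {u'. u' = 0 \<or> (u' \<noteq> 0 \<and> B u' \<subset> B u)}"
      using that by auto
    thus ?thesis unfolding Phi_def using that by simp
  qed
  have leq: "low FF u = low FF' u" if u0: "u \<noteq> 0" for u
    using low_Phi[OF fl sc u0] low_Phi[OF fl' sc' u0] Pcong[OF eq u0] by simp
  have heq: "high FF u = high FF' u" if u0: "u \<noteq> 0" for u
    using high_low[OF fl u0] high_low[OF fl' u0] leq u0 by auto
  show ?thesis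
  proof
    fix F assume F: "F \<in> FF"
    have "\<forall>F\<in>FF. \<exists>G. imm_pair FF F G \<or> imm_pair FF G F" using fl unfolding flagish_def by (elim conjE)
    then obtain G where "imm_pair FF F G \<or> imm_pair FF G F" using F by blast
    thus "F \<in> FF'"
    proof
      assume pr: "imm_pair FF F G"
      then obtain v where v: "v \<in> G" "v \<notin> F" unfolding imm_pair_def by blast
      have v0: "v \<noteq> 0" using v flag_zero[OF fl F] by blast
      have "low FF v = F" using L2[OF fl pr v] by blast
      moreover have "low FF' v \<in> FF'" using L1[OF fl' v0] unfolding imm_pair_def by blast
      ultimately show ?thesis using leq[OF v0] by simp
    next
      assume pr: "imm_pair FF G F"
      then obtain v where v: "v \<in> F" "v \<notin> G" unfolding imm_pair_def by blast
      have GF: "G \<in> FF" using pr unfolding imm_pair_def by blast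
      have v0: "v \<noteq> 0" using v flag_zero[OF fl GF] by blast
      have "high FF v = F" using L2[OF fl pr v] by blast
      moreover have "high FF' v \<in> FF'" using L1[OF fl' v0] unfolding imm_pair_def by blast
      ultimately show ?thesis using heq[OF v0] by simp
    qed
  qed
qed



lemma gen_flag_flagish:
  assumes "vector_space sc" "gen_flag sc FF"
  shows "flagish FF"
proof -
  have m: "module sc" using assms(1) by (simp add: module_iff_vector_space)
  have s: "\<forall>F\<in>FF. module.subspace sc F" using assms(2) unfolding gen_flag_def by (elim conjE)
  have "\<forall>F\<in>FF. 0 \<in> F" using s module.subspace_0[OF m] by blast
  thus ?thesis using assms(2) unfolding gen_flag_def flagish_def by blast
qed

definition rk :: "(complex \<Rightarrow> 'v::ab_group_add \<Rightarrow> 'v) \<Rightarrow> (complex \<Rightarrow> 'w::ab_group_add \<Rightarrow> 'w)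
   \<Rightarrow> ('v \<Rightarrow> 'w \<Rightarrow> complex) \<Rightarrow> 'v \<Rightarrow> 'w \<Rightarrow> ('v \<Rightarrow> 'v) \<times> ('w \<Rightarrow> 'w)" where
  "rk scV scW pr v w = ((\<lambda>u. scV (pr u w) v), (\<lambda>y. - scW (pr v y) w))"

lemma rk_gl: "rk scV scW pr v w \<in> glVV scV scW pr"
  unfolding glVV_def rk_def
  by (rule CollectI, rule exI[of _ "[(v,w)]"]) simp

lemma scale_cancel:
  fixes sc :: "complex \<Rightarrow> 'v::ab_group_add \<Rightarrow> 'v"
  assumes "module sc" "c \<noteq> 0" "module.subspace sc F" "sc c v \<in> F"
  shows "v \<in> F"
proof -
  have "sc (1/c) (sc c v) \<in> F" using module.subspace_scale[OF assms(1) assms(3) assms(4)] .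
  thus ?thesis using assms(2) module.scale_scale[OF assms(1)] module.scale_one[OF assms(1)] by simp
qed

lemma rk_StV:
  assumes m: "module scV" and sub: "\<forall>F\<in>FF. module.subspace scV F"
  shows "rk scV scW pr v w \<in> St_V scV scW pr FF \<longleftrightarrow> (\<forall>F\<in>FF. v \<in> F \<or> w \<in> perpV pr F)"
proof -
  have "(\<lambda>u. scV (pr u w) v) ` F \<subseteq> F \<longleftrightarrow> v \<in> F \<or> w \<in> perpV pr F" if F: "F \<in> FF" for F
  proof
    assume im: "(\<lambda>u. scV (pr u w) v) ` F \<subseteq> F"
    show "v \<in> F \<or> w \<in> perpV pr F"
    proof (cases "w \<in> perpV pr F")
      case False
      then obtain u where u: "u \<in> F" "pr u w \<noteq> 0" unfolding perpV_def by blast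
      have "scV (pr u w) v \<in> F" using im u by blast
      thus ?thesis using scale_cancel[OF m u(2)] sub F by blast
    qed simp
  next
    assume h: "v \<in> F \<or> w \<in> perpV pr F"
    show "(\<lambda>u. scV (pr u w) v) ` F \<subseteq> F"
    proof
      fix x assume "x \<in> (\<lambda>u. scV (pr u w) v) ` F"
      then obtain u where u: "u \<in> F" "x = scV (pr u w) v" by blast
      show "x \<in> F"
      proof (cases "v \<in> F")
        case True thus ?thesis using u module.subspace_scale[OF m] sub F by blast
      next
        case False
        hence "pr u w = 0" using h u unfolding perpV_def by blast
        thus ?thesis using u module.scale_zero_left[OF m] module.subspace_0[OF m] sub F by simp
      qed
    qed
  qed
  thus ?thesis unfolding St_V_def using rk_gl by (auto simp: rk_def)
qed

lemma rk_StW: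
  assumes m: "module scW" and sub: "\<forall>G\<in>GG. module.subspace scW G"
  shows "rk scV scW pr v w \<in> St_W scV scW pr GG \<longleftrightarrow> (\<forall>G\<in>GG. w \<in> G \<or> v \<in> perpW pr G)"
proof -
  have "(\<lambda>y. - scW (pr v y) w) ` G \<subseteq> G \<longleftrightarrow> w \<in> G \<or> v \<in> perpW pr G" if G: "G \<in> GG" for G
  proof
    assume im: "(\<lambda>y. - scW (pr v y) w) ` G \<subseteq> G"
    show "w \<in> G \<or> v \<in> perpW pr G"
    proof (cases "v \<in> perpW pr G")
      case False
      then obtain y where y: "y \<in> G" "pr v y \<noteq> 0" unfolding perpW_def by blast
      have "- scW (pr v y) w \<in> G" using im y by blast
      hence "scW (- pr v y) w \<in> G" using module.scale_minus_left[OF m] by simp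
      moreover have "- pr v y \<noteq> 0" using y by simp
      ultimately show ?thesis using scale_cancel[OF m] sub G by blast
    qed simp
  next
    assume h: "w \<in> G \<or> v \<in> perpW pr G"
    show "(\<lambda>y. - scW (pr v y) w) ` G \<subseteq> G"
    proof
      fix x assume "x \<in> (\<lambda>y. - scW (pr v y) w) ` G"
      then obtain y where y: "y \<in> G" "x = - scW (pr v y) w" by blast
      show "x \<in> G"
      proof (cases "w \<in> G")
        case True thus ?thesis using y module.subspace_scale[OF m] module.subspace_neg[OF m] sub G by blast
      next
        case False
        hence "pr v y = 0" using h y unfolding perpW_def by blast
        thus ?thesis using y module.scale_zero_left[OF m] module.subspace_0[OF m] sub G by simp
      qed
    qed
  qed
  thus ?thesis unfolding St_W_def using rk_gl by (auto simp: rk_def)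
qed



lemma pr_lin2:
  assumes "nondeg_pairing scV scW pr"
  shows "pr u (scW c y) = c * pr u y" "pr u (y + z) = pr u y + pr u z" "pr u 0 = 0" "pr u (- y) = - pr u y"
proof -
  have l: "Vector_Spaces.linear scW (*) (pr u)" using assms unfolding nondeg_pairing_def by blast
  have a: "\<forall>x y. pr u (x + y) = pr u x + pr u y" and s: "\<forall>c x. pr u (scW c x) = c * pr u x"
    using l unfolding Vector_Spaces.linear_iff by auto
  show 1: "pr u (scW c y) = c * pr u y" using s by blast
  show "pr u (y + z) = pr u y + pr u z" using a by blast
  have "pr u (0 + 0) = pr u 0 + pr u 0" using a by blast
  thus z: "pr u 0 = 0" by simp
  have "pr u (y + - y) = pr u y + pr u (- y)" using a by blast
  thus "pr u (- y) = - pr u y" using z by (simp add: eq_neg_iff_add_eq_0 add.commute)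
qed

lemma pr_lin1:
  assumes "nondeg_pairing scV scW pr"
  shows "pr (scV c v) y = c * pr v y" "pr 0 y = 0"
proof -
  have l: "Vector_Spaces.linear scV (*) (\<lambda>u. pr u y)" using assms unfolding nondeg_pairing_def by blast
  have a: "\<forall>x z. pr (x + z) y = pr x y + pr z y" and s: "\<forall>c x. pr (scV c x) y = c * pr x y"
    using l unfolding Vector_Spaces.linear_iff by auto
  show "pr (scV c v) y = c * pr v y" using s by blast
  have "pr (0 + 0) y = pr 0 y + pr 0 y" using a by blast
  thus "pr 0 y = 0" by simp
qed

lemma TA_from_taut:
  assumes vV: "vector_space scV" and vW: "vector_space scW" and nd: "nondeg_pairing scV scW pr"
    and t: "taut_couple scV scW pr FF GG"
  shows "\<forall>F\<in>FF. \<forall>w. w \<noteq> 0 \<longrightarrow> (\<forall>v'. v' \<in> perpW pr (low GG w) \<longrightarrow> w \<in> perpV pr F \<or> v' \<in> perpW pr (perpV pr F))"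
proof (intro ballI allI impI)
  fix F w v' assume F: "F \<in> FF" and w0: "w \<noteq> 0" and v': "v' \<in> perpW pr (low GG w)"
  have mW: "module scW" using vW by (simp add: module_iff_vector_space)
  have gfG: "gen_flag scW GG" using t unfolding taut_couple_def semiclosed_W_def by blast
  have flG: "flagish GG" using gen_flag_flagish[OF vW gfG] .
  have subG: "\<forall>G\<in>GG. module.subspace scW G" using gfG unfolding gen_flag_def by (elim conjE)
  have "\<forall>G\<in>GG. w \<in> G \<or> v' \<in> perpW pr G"
  proof
    fix G assume G: "G \<in> GG"
    show "w \<in> G \<or> v' \<in> perpW pr G"
    proof (cases "w \<in> G")
      case False
      hence "G \<subseteq> low GG w" using L3[OF flG G w0] by blast
      hence "perpW pr (low GG w) \<subseteq> perpW pr G" by (rule perpW_anti)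
      thus ?thesis using v' by blast
    qed simp
  qed
  hence x: "rk scV scW pr v' w \<in> St_W scV scW pr GG" using rk_StW[OF mW subG] by blast
  have st: "\<forall>x\<in>St_W scV scW pr GG. \<forall>F\<in>FF. snd x ` perpV pr F \<subseteq> perpV pr F"
    using t unfolding taut_couple_def by blast
  have "snd (rk scV scW pr v' w) ` perpV pr F \<subseteq> perpV pr F" using st x F by blast
  hence im: "(\<lambda>y. - scW (pr v' y) w) ` perpV pr F \<subseteq> perpV pr F" by (simp add: rk_def)
  show "w \<in> perpV pr F \<or> v' \<in> perpW pr (perpV pr F)"
  proof (cases "w \<in> perpV pr F")
    case False
    then obtain u where u: "u \<in> F" "pr u w \<noteq> 0" unfolding perpV_def by blast
    have "pr v' y = 0" if y: "y \<in> perpV pr F" for y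
    proof -
      have "- scW (pr v' y) w \<in> perpV pr F" using im y by blast
      hence "pr u (- scW (pr v' y) w) = 0" using u unfolding perpV_def by blast
      hence "pr v' y * pr u w = 0" using pr_lin2[OF nd] by simp
      thus ?thesis using u by simp
    qed
    thus ?thesis unfolding perpW_def by blast
  qed simp
qed

lemma TB_from_taut:
  assumes vV: "vector_space scV" and vW: "vector_space scW" and nd: "nondeg_pairing scV scW pr"
    and t: "taut_couple scV scW pr FF GG"
  shows "\<forall>G\<in>GG. \<forall>v. v \<noteq> 0 \<longrightarrow> (\<forall>w. w \<in> perpV pr (low FF v) \<longrightarrow> v \<in> perpW pr G \<or> w \<in> perpV pr (perpW pr G))"
proof (intro ballI allI impI)
  fix G v w assume G: "G \<in> GG" and v0: "v \<noteq> 0" and w: "w \<in> perpV pr (low FF v)"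
  have mV: "module scV" using vV by (simp add: module_iff_vector_space)
  have gfF: "gen_flag scV FF" using t unfolding taut_couple_def semiclosed_V_def by blast
  have flF: "flagish FF" using gen_flag_flagish[OF vV gfF] .
  have subF: "\<forall>F\<in>FF. module.subspace scV F" using gfF unfolding gen_flag_def by (elim conjE)
  have "\<forall>F\<in>FF. v \<in> F \<or> w \<in> perpV pr F"
  proof
    fix F assume F: "F \<in> FF"
    show "v \<in> F \<or> w \<in> perpV pr F"
    proof (cases "v \<in> F")
      case False
      hence "F \<subseteq> low FF v" using L3[OF flF F v0] by blast
      hence "perpV pr (low FF v) \<subseteq> perpV pr F" by (rule perpV_anti)
      thus ?thesis using w by blast
    qed simp
  qed
  hence x: "rk scV scW pr v w \<in> St_V scV scW pr FF" using rk_StV[OF mV subF] by blast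
  have st: "\<forall>x\<in>St_V scV scW pr FF. \<forall>G\<in>GG. fst x ` perpW pr G \<subseteq> perpW pr G"
    using t unfolding taut_couple_def by blast
  have "fst (rk scV scW pr v w) ` perpW pr G \<subseteq> perpW pr G" using st x G by blast
  hence im: "(\<lambda>u. scV (pr u w) v) ` perpW pr G \<subseteq> perpW pr G" by (simp add: rk_def)
  show "v \<in> perpW pr G \<or> w \<in> perpV pr (perpW pr G)"
  proof (cases "v \<in> perpW pr G")
    case False
    then obtain y where y: "y \<in> G" "pr v y \<noteq> 0" unfolding perpW_def by blast
    have "pr u w = 0" if u: "u \<in> perpW pr G" for u
    proof -
      have "scV (pr u w) v \<in> perpW pr G" using im u by blast
      hence "pr (scV (pr u w) v) y = 0" using y unfolding perpW_def by blast
      hence "pr u w * pr v y = 0" using pr_lin1[OF nd] by simp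
      thus ?thesis using y by simp
    qed
    thus ?thesis unfolding perpV_def by blast
  qed simp
qed



lemma taut_info:
  assumes vV: "vector_space scV" and vW: "vector_space scW"
    and t: "taut_couple scV scW pr FF GG"
  shows "flagish FF" "flagish GG" "\<forall>F\<in>FF. module.subspace scV F" "\<forall>G\<in>GG. module.subspace scW G"
     "\<forall>F' F''. imm_pair FF F' F'' \<longrightarrow> perpW pr (perpV pr F') \<in> {F', F''}"
     "\<forall>G' G''. imm_pair GG G' G'' \<longrightarrow> perpV pr (perpW pr G') \<in> {G', G''}"
proof -
  have gF: "gen_flag scV FF" and gG: "gen_flag scW GG"
    using t unfolding taut_couple_def semiclosed_V_def semiclosed_W_def by auto
  show "flagish FF" using gen_flag_flagish[OF vV gF] .
  show "flagish GG" using gen_flag_flagish[OF vW gG] .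
  show "\<forall>F\<in>FF. module.subspace scV F" using gF unfolding gen_flag_def by (elim conjE)
  show "\<forall>G\<in>GG. module.subspace scW G" using gG unfolding gen_flag_def by (elim conjE)
  show "\<forall>F' F''. imm_pair FF F' F'' \<longrightarrow> perpW pr (perpV pr F') \<in> {F', F''}"
    using t unfolding taut_couple_def semiclosed_V_def by (elim conjE)
  show "\<forall>G' G''. imm_pair GG G' G'' \<longrightarrow> perpV pr (perpW pr G') \<in> {G', G''}"
    using t unfolding taut_couple_def semiclosed_W_def by (elim conjE)
qed

theorem proposition3p8:
  fixes scV :: "complex \<Rightarrow> 'v::ab_group_add \<Rightarrow> 'v"
    and scW :: "complex \<Rightarrow> 'w::ab_group_add \<Rightarrow> 'w"
    and pr :: "'v \<Rightarrow> 'w \<Rightarrow> complex"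
  assumes "vector_space scV" and "vector_space scW"
    and "countable_dim scV" and "countable_dim scW"
    and "nondeg_pairing scV scW pr"
  shows "inj_on (\<lambda>(\<FF>, \<GG>). St_V scV scW pr \<FF> \<inter> St_W scV scW pr \<GG>)
           {(\<FF>, \<GG>). taut_couple scV scW pr \<FF> \<GG>}"
proof (rule inj_onI, clarify)
  note vV = assms(1) and vW = assms(2) and nd = assms(5)
  have mV: "module scV" and mW: "module scW" using vV vW by (simp_all add: module_iff_vector_space)
  fix F1 G1 F2 G2
  assume t1: "taut_couple scV scW pr F1 G1" and t2: "taut_couple scV scW pr F2 G2"
    and eqP: "St_V scV scW pr F1 \<inter> St_W scV scW pr G1 = St_V scV scW pr F2 \<inter> St_W scV scW pr G2"
  note i1 = taut_info[OF vV vW t1] and i2 = taut_info[OF vV vW t2]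
  have RelP: "Rel pr FF GG v w \<longleftrightarrow> rk scV scW pr v w \<in> St_V scV scW pr FF \<inter> St_W scV scW pr GG"
    if t: "taut_couple scV scW pr FF GG" for FF GG v w
  proof -
    note i = taut_info[OF vV vW t]
    show ?thesis unfolding Rel_def Int_iff rk_StV[OF mV i(3)] rk_StW[OF mW i(4)] ..
  qed
  have Req: "Rel pr F1 G1 v w = Rel pr F2 G2 v w" for v w
    unfolding RelP[OF t1] RelP[OF t2] eqP ..
  have p0: "\<forall>x. pr x 0 = 0" using pr_lin2[OF nd] by blast
  have p0s: "\<forall>x. swp pr x 0 = 0" using pr_lin1[OF nd] unfolding swp_def by blast
  have clV: "perpW pr {w. Rel pr FF GG v w} = perpW pr (perpV pr (low FF v))"
    if t: "taut_couple scV scW pr FF GG" and v0: "v \<noteq> 0" for FF GG v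
  proof -
    note i = taut_info[OF vV vW t]
    show ?thesis using core[OF i(1) i(2) i(6) p0 TA_from_taut[OF vV vW nd t] TB_from_taut[OF vV vW nd t] v0] .
  qed
  have clW: "perpV pr {v. Rel pr FF GG v w} = perpV pr (perpW pr (low GG w))"
    if t: "taut_couple scV scW pr FF GG" and w0: "w \<noteq> 0" for FF GG w
  proof -
    note i = taut_info[OF vV vW t]
    have a: "\<forall>G\<in>GG. \<forall>v. v \<noteq> 0 \<longrightarrow> (\<forall>w'. w' \<in> perpW (swp pr) (low FF v) \<longrightarrow> v \<in> perpV (swp pr) G \<or> w' \<in> perpW (swp pr) (perpV (swp pr) G))"
      using TB_from_taut[OF vV vW nd t] unfolding perp_swap .
    have b: "\<forall>F\<in>FF. \<forall>w. w \<noteq> 0 \<longrightarrow> (\<forall>v'. v' \<in> perpV (swp pr) (low GG w) \<longrightarrow> w \<in> perpW (swp pr) F \<or> v' \<in> perpV (swp pr) (perpW (swp pr) F))"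
      using TA_from_taut[OF vV vW nd t] unfolding perp_swap .
    have c: "\<forall>F' F''. imm_pair FF F' F'' \<longrightarrow> perpV (swp pr) (perpW (swp pr) F') \<in> {F', F''}"
      using i(5) unfolding perp_swap .
    have "perpW (swp pr) {v. Rel (swp pr) GG FF w v} = perpW (swp pr) (perpV (swp pr) (low GG w))"
      using core[OF i(2) i(1) c p0s a b w0] .
    thus ?thesis unfolding perp_swap Rel_swap .
  qed
  have eqF: "\<forall>v. v \<noteq> 0 \<longrightarrow> perpW pr (perpV pr (low F1 v)) = perpW pr (perpV pr (low F2 v))"
  proof (intro allI impI)
    fix v :: 'v assume v0: "v \<noteq> 0"
    have "{w. Rel pr F1 G1 v w} = {w. Rel pr F2 G2 v w}" using Req by simp
    thus "perpW pr (perpV pr (low F1 v)) = perpW pr (perpV pr (low F2 v))"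
      using clV[OF t1 v0] clV[OF t2 v0] by simp
  qed
  have eqF': "\<forall>v. v \<noteq> 0 \<longrightarrow> perpW pr (perpV pr (low F2 v)) = perpW pr (perpV pr (low F1 v))"
    using eqF by simp
  have F12: "F1 = F2"
    using recover_sub[OF i1(1) i2(1) i1(5) i2(5) eqF] recover_sub[OF i2(1) i1(1) i2(5) i1(5) eqF'] by blast
  have eqG: "\<forall>w. w \<noteq> 0 \<longrightarrow> perpW (swp pr) (perpV (swp pr) (low G1 w)) = perpW (swp pr) (perpV (swp pr) (low G2 w))"
  proof (intro allI impI)
    fix w :: 'w assume w0: "w \<noteq> 0"
    have "{v. Rel pr F1 G1 v w} = {v. Rel pr F2 G2 v w}" using Req by simp
    thus "perpW (swp pr) (perpV (swp pr) (low G1 w)) = perpW (swp pr) (perpV (swp pr) (low G2 w))"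
      unfolding perp_swap using clW[OF t1 w0] clW[OF t2 w0] by simp
  qed
  have eqG': "\<forall>w. w \<noteq> 0 \<longrightarrow> perpW (swp pr) (perpV (swp pr) (low G2 w)) = perpW (swp pr) (perpV (swp pr) (low G1 w))"
    using eqG by simp
  have s1: "\<forall>F' F''. imm_pair G1 F' F'' \<longrightarrow> perpW (swp pr) (perpV (swp pr) F') \<in> {F', F''}"
    using i1(6) unfolding perp_swap .
  have s2: "\<forall>F' F''. imm_pair G2 F' F'' \<longrightarrow> perpW (swp pr) (perpV (swp pr) F') \<in> {F', F''}"
    using i2(6) unfolding perp_swap .
  have G12: "G1 = G2"
    using recover_sub[OF i1(2) i2(2) s1 s2 eqG] recover_sub[OF i2(2) i1(2) s2 s1 eqG'] by blast
  show "F1 = F2 \<and> G1 = G2" using F12 G12 by blast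
qed

end
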